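(* Let $G$ be a $d$-regular graph ($d>1$) that has a good signing. Then the lexicographic product $G\circ\overline{K_4}$ has a good signing, i.e. there is an edge-signing $\sigma'$ of $G\circ\overline{K_4}$ such that every eigenvalue of its signed adjacency matrix has absolute value at most $2\sqrt{4d-1}$.
   Context: For an edge-signing $\sigma: E(H)\to\{-1,1\}$ of a graph $H$, the signed adjacency matrix $A^{\sigma}$ has $(i,j)$ entry $\sigma(ij)$ if $ij\in E(H)$ and $0$ otherwise. A good signing of a $D$-regular graph is a signing all of whose signed adjacency eigenvalues have absolute value at most $2\sqrt{D-1}$; $G\circ\overline{K_4}$ is $4d$-regular. $\overline{K_4}$ is the edgeless graph on four vertices. The lexicographic product $G\circ H$ has vertex set $V(G)\times V(H)$, with $(x,y)$ adjacent to $(z,t)$ iff $xz\in E(G)$, or $x=z$ and $yt\in E(H)$. *)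

theory Defs
  imports "HOL-Analysis.Analysis"
begin

definition simple_graph :: "'a set \<Rightarrow> ('a \<Rightarrow> 'a \<Rightarrow> bool) \<Rightarrow> bool" where
  "simple_graph V E \<longleftrightarrow> finite V \<and> (\<forall>x y. E x y \<longrightarrow> x \<in> V \<and> y \<in> V)
     \<and> (\<forall>x y. E x y \<longrightarrow> E y x) \<and> (\<forall>x. \<not> E x x)"

definition regular_graph :: "'a set \<Rightarrow> ('a \<Rightarrow> 'a \<Rightarrow> bool) \<Rightarrow> nat \<Rightarrow> bool" where
  "regular_graph V E D \<longleftrightarrow> simple_graph V E \<and> (\<forall>x\<in>V. card {y\<in>V. E x y} = D)"

definition signing :: "'a set \<Rightarrow> ('a \<Rightarrow> 'a \<Rightarrow> bool) \<Rightarrow> ('a \<Rightarrow> 'a \<Rightarrow> real) \<Rightarrow> bool" where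
  "signing V E \<sigma> \<longleftrightarrow> (\<forall>x y. E x y \<longrightarrow> \<sigma> x y = \<sigma> y x \<and> (\<sigma> x y = 1 \<or> \<sigma> x y = -1))"

definition signed_adj :: "('a \<Rightarrow> 'a \<Rightarrow> bool) \<Rightarrow> ('a \<Rightarrow> 'a \<Rightarrow> real) \<Rightarrow> 'a \<Rightarrow> 'a \<Rightarrow> real" where
  "signed_adj E \<sigma> i j = (if E i j then \<sigma> i j else 0)"

definition is_eigenvalue :: "'a set \<Rightarrow> ('a \<Rightarrow> 'a \<Rightarrow> real) \<Rightarrow> complex \<Rightarrow> bool" where
  "is_eigenvalue V A \<mu> \<longleftrightarrow> (\<exists>v :: 'a \<Rightarrow> complex. (\<exists>i\<in>V. v i \<noteq> 0) \<and>
     (\<forall>i\<in>V. (\<Sum>j\<in>V. complex_of_real (A i j) * v j) = \<mu> * v i))"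

definition good_signing :: "'a set \<Rightarrow> ('a \<Rightarrow> 'a \<Rightarrow> bool) \<Rightarrow> nat \<Rightarrow> ('a \<Rightarrow> 'a \<Rightarrow> real) \<Rightarrow> bool" where
  "good_signing V E D \<sigma> \<longleftrightarrow> signing V E \<sigma> \<and>
     (\<forall>\<mu>. is_eigenvalue V (signed_adj E \<sigma>) \<mu> \<longrightarrow> cmod \<mu> \<le> 2 * sqrt (real D - 1))"

definition lex_prod_edges :: "('a \<Rightarrow> 'a \<Rightarrow> bool) \<Rightarrow> ('b \<Rightarrow> 'b \<Rightarrow> bool) \<Rightarrow> ('a \<times> 'b) \<Rightarrow> ('a \<times> 'b) \<Rightarrow> bool" where
  "lex_prod_edges EG EH p q \<longleftrightarrow> EG (fst p) (fst q) \<or> (fst p = fst q \<and> EH (snd p) (snd q))"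

definition K4bar_vertices :: "nat set" where "K4bar_vertices = {0..<4}"
definition K4bar_edges :: "nat \<Rightarrow> nat \<Rightarrow> bool" where "K4bar_edges x y = False"

end

theory Submission
  imports Defs
begin

definition hmat :: "nat \<Rightarrow> nat \<Rightarrow> real" where
  "hmat y t = (if (y,t) \<in> {(1,1),(1,3),(3,1),(2,2),(2,3),(3,2)} then -1 else 1)"

lemma hmat_sym: "hmat y t = hmat t y"
  unfolding hmat_def by auto

lemma hmat_pm: "hmat y t = 1 \<or> hmat y t = -1"
  unfolding hmat_def by auto

lemma K4: "K4bar_vertices = {0,1,2,3}"
  unfolding K4bar_vertices_def by auto

lemma hmat_sq:
  fixes f :: "nat \<Rightarrow> complex"
  assumes "y \<in> K4bar_vertices"
  shows "(\<Sum>y'\<in>K4bar_vertices. complex_of_real (hmat y y') *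
           (\<Sum>t\<in>K4bar_vertices. complex_of_real (hmat y' t) * f t)) = 4 * f y"
  using assms unfolding K4 by (auto simp: hmat_def algebra_simps)

theorem mainTheorem4:
  fixes V :: "'a set" and E :: "'a \<Rightarrow> 'a \<Rightarrow> bool" and d :: nat and \<sigma> :: "'a \<Rightarrow> 'a \<Rightarrow> real"
  assumes "regular_graph V E d" and "d > 1" and "good_signing V E d \<sigma>"
  shows "\<exists>\<sigma>'. good_signing (V \<times> K4bar_vertices) (lex_prod_edges E K4bar_edges) (4 * d) \<sigma>'"
proof -
  define K where "K = K4bar_vertices"
  define \<sigma>' where "\<sigma>' = (\<lambda>p q. \<sigma> (fst p) (fst q) * hmat (snd p) (snd q))"
  have sg: "signing V E \<sigma>" and gd: "\<And>\<mu>. is_eigenvalue V (signed_adj E \<sigma>) \<mu> \<Longrightarrow> cmod \<mu> \<le> 2 * sqrt (real d - 1)"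
    using assms(3) unfolding good_signing_def by auto
  have ledge: "lex_prod_edges E K4bar_edges p q = E (fst p) (fst q)" for p q
    unfolding lex_prod_edges_def K4bar_edges_def by auto
  have sig': "signing (V \<times> K) (lex_prod_edges E K4bar_edges) \<sigma>'"
    unfolding signing_def ledge \<sigma>'_def
  proof (intro allI impI)
    fix p q :: "'a \<times> nat" assume e: "E (fst p) (fst q)"
    then have "\<sigma> (fst p) (fst q) = \<sigma> (fst q) (fst p)" "\<sigma> (fst p) (fst q) = 1 \<or> \<sigma> (fst p) (fst q) = -1"
      using sg unfolding signing_def by auto
    then show "\<sigma> (fst p) (fst q) * hmat (snd p) (snd q) = \<sigma> (fst q) (fst p) * hmat (snd q) (snd p) \<and>
        (\<sigma> (fst p) (fst q) * hmat (snd p) (snd q) = 1 \<or> \<sigma> (fst p) (fst q) * hmat (snd p) (snd q) = - 1)"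
      using hmat_sym[of "snd p" "snd q"] hmat_pm[of "snd p" "snd q"] by auto
  qed
  have fin: "finite V" using assms(1) unfolding regular_graph_def simple_graph_def by auto
  have finK: "finite K" unfolding K_def K4 by auto
  have eig: "cmod \<mu> \<le> 2 * sqrt (real (4 * d) - 1)"
    if ev: "is_eigenvalue (V \<times> K) (signed_adj (lex_prod_edges E K4bar_edges) \<sigma>') \<mu>" for \<mu>
  proof -
    define a where "a = (\<lambda>x z. complex_of_real (signed_adj E \<sigma> x z))"
    define hh where "hh = (\<lambda>y t. complex_of_real (hmat y t))"
    obtain v where vnz: "\<exists>i\<in>V \<times> K. v i \<noteq> 0" and
      veq: "\<forall>i\<in>V \<times> K. (\<Sum>j\<in>V \<times> K. complex_of_real (signed_adj (lex_prod_edges E K4bar_edges) \<sigma>' i j) * v j) = \<mu> * v i"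
      using ev unfolding is_eigenvalue_def by blast
    define W where "W = (\<lambda>z y. \<Sum>t\<in>K. hh y t * v (z,t))"
    have entry: "complex_of_real (signed_adj (lex_prod_edges E K4bar_edges) \<sigma>' (x,y) (z,t)) = a x z * hh y t"
      for x y z t
      unfolding a_def hh_def signed_adj_def ledge \<sigma>'_def by simp
    have eq1: "(\<Sum>z\<in>V. a x z * W z y) = \<mu> * v (x,y)" if "x \<in> V" "y \<in> K" for x y
    proof -
      have "\<mu> * v (x,y) = (\<Sum>j\<in>V \<times> K. complex_of_real (signed_adj (lex_prod_edges E K4bar_edges) \<sigma>' (x,y) j) * v j)"
        using veq that by auto
      also have "\<dots> = (\<Sum>z\<in>V. \<Sum>t\<in>K. a x z * hh y t * v (z,t))"
        by (subst sum.cartesian_product, rule sum.cong, simp, auto simp: entry)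
      also have "\<dots> = (\<Sum>z\<in>V. a x z * W z y)"
        unfolding W_def by (simp add: sum_distrib_left mult.assoc)
      finally show ?thesis by simp
    qed
    have HW: "(\<Sum>y'\<in>K. hh y y' * W z y') = 4 * v (z,y)" if "y \<in> K" for z y
      using hmat_sq[of y "\<lambda>t. v (z,t)"] that unfolding W_def hh_def K_def by simp
    have eq2: "(\<Sum>z\<in>V. a x z * v (z,y)) = (\<mu> / 4) * W x y" if "x \<in> V" "y \<in> K" for x y
    proof -
      have "\<mu> * W x y = (\<Sum>y'\<in>K. hh y y' * (\<mu> * v (x,y')))"
        unfolding W_def by (simp add: sum_distrib_left algebra_simps)
      also have "\<dots> = (\<Sum>y'\<in>K. hh y y' * (\<Sum>z\<in>V. a x z * W z y'))"
        using eq1 that by simp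
      also have "\<dots> = (\<Sum>z\<in>V. a x z * (\<Sum>y'\<in>K. hh y y' * W z y'))"
        by (simp add: sum_distrib_left sum.swap[of _ K V] algebra_simps)
      also have "\<dots> = (\<Sum>z\<in>V. a x z * (4 * v (z,y)))"
        using HW that by simp
      finally show ?thesis by (simp add: sum_distrib_left algebra_simps)
    qed
    obtain x0 y0 where x0: "x0 \<in> V" and y0: "y0 \<in> K" and nz: "v (x0,y0) \<noteq> 0"
      using vnz by auto
    have key: "cmod (s * \<mu> / 2) \<le> 2 * sqrt (real d - 1)"
      if s: "s = 1 \<or> s = -1" and unz: "W x0 y0 + 2 * s * v (x0,y0) \<noteq> 0" for s :: complex
    proof (rule gd)
      show "is_eigenvalue V (signed_adj E \<sigma>) (s * \<mu> / 2)"
        unfolding is_eigenvalue_def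
      proof (intro exI[of _ "\<lambda>z. W z y0 + 2 * s * v (z,y0)"] conjI ballI)
        show "\<exists>i\<in>V. W i y0 + 2 * s * v (i, y0) \<noteq> 0" using x0 unz by blast
        fix x assume x: "x \<in> V"
        have "(\<Sum>j\<in>V. complex_of_real (signed_adj E \<sigma> x j) * (W j y0 + 2 * s * v (j, y0)))
            = (\<Sum>j\<in>V. a x j * W j y0) + 2 * s * (\<Sum>j\<in>V. a x j * v (j, y0))"
          unfolding a_def by (simp add: algebra_simps sum.distrib sum_distrib_left)
        also have "\<dots> = \<mu> * v (x,y0) + 2 * s * ((\<mu> / 4) * W x y0)"
          by (simp only: eq1[OF x y0] eq2[OF x y0])
        also have "\<dots> = s * \<mu> / 2 * (W x y0 + 2 * s * v (x, y0))"
          using s by (elim disjE) (simp_all add: algebra_simps)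
        finally show "(\<Sum>j\<in>V. complex_of_real (signed_adj E \<sigma> x j) * (W j y0 + 2 * s * v (j, y0)))
            = s * \<mu> / 2 * (W x y0 + 2 * s * v (x, y0))" .
      qed
    qed
    have "\<exists>s::complex. (s = 1 \<or> s = -1) \<and> W x0 y0 + 2 * s * v (x0,y0) \<noteq> 0"
    proof (rule ccontr)
      assume "\<not> ?thesis"
      then have al: "\<forall>s::complex. (s = 1 \<or> s = -1) \<longrightarrow> W x0 y0 + 2 * s * v (x0,y0) = 0" by blast
      have h1: "W x0 y0 + 2 * 1 * v (x0,y0) = 0" using al by blast
      have h2: "W x0 y0 + 2 * (-1) * v (x0,y0) = 0" using al by blast
      have "4 * v (x0,y0) = (W x0 y0 + 2 * 1 * v (x0,y0)) - (W x0 y0 + 2 * (-1) * v (x0,y0))"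
        by (simp add: algebra_simps)
      then have "4 * v (x0,y0) = 0" using h1 h2 by simp
      then show False using nz by simp
    qed
    then obtain s :: complex where s: "s = 1 \<or> s = -1" and unz: "W x0 y0 + 2 * s * v (x0,y0) \<noteq> 0" by blast
    have "cmod (s * \<mu> / 2) = cmod \<mu> / 2" using s by (auto simp: norm_divide)
    then have "cmod \<mu> \<le> 4 * sqrt (real d - 1)" using key[OF s unz] by simp
    also have "4 * sqrt (real d - 1) = 2 * sqrt (real (4*d) - 4)"
    proof -
      have "sqrt (real (4*d) - 4) = sqrt (4 * (real d - 1))" by simp
      also have "\<dots> = sqrt 4 * sqrt (real d - 1)" by (rule real_sqrt_mult)
      also have "sqrt 4 = (2::real)" by (simp add: real_sqrt_eq_iff[symmetric] real_sqrt_unique)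
      finally show ?thesis by simp
    qed
    also have "\<dots> \<le> 2 * sqrt (real (4 * d) - 1)" by simp
    finally show ?thesis .
  qed
  have "good_signing (V \<times> K4bar_vertices) (lex_prod_edges E K4bar_edges) (4 * d) \<sigma>'"
    unfolding good_signing_def using sig' eig K_def by auto
  then show ?thesis by blast
qed

end
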